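(* Let $E,E':\mathcal P N\times Ł_n^S\to Ł_n$ be homogeneous $Ł_n$-valued effectivity functions. Then $E=E'$ if and only if $E^\sharp=E'^\sharp$, where $E^\sharp$ denotes the restriction of $E$ to $\mathcal P N\times Ł_1^S$.
   Context: For a positive integer $n$ let $Ł_n=\{0,\frac1n,\dots,1\}$ with $\neg x=1-x$, $x\oplus y=\min(x+y,1)$, $x\odot y=\max(x+y-1,0)$, applied pointwise to functions in $Ł_n^S$. $Ł_1^S=\{0,1\}^S\subseteq Ł_n^S$. $N$ is a finite set, $S$ a set. An $Ł_n$-valued effectivity function is any map $E:\mathcal P N\times Ł_n^S\to Ł_n$; it is homogeneous if $E(C,f\oplus f)=E(C,f)\oplus E(C,f)$ and $E(C,f\odot f)=E(C,f)\odot E(C,f)$ for all $C\subseteq N$, $f\in Ł_n^S$. *)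

theory Defs
  imports Complex_Main "HOL-Library.FuncSet"
begin

definition Luk :: "nat \<Rightarrow> real set" where
  "Luk n = {real k / real n | k. k \<le> n}"

definition luk_oplus :: "real \<Rightarrow> real \<Rightarrow> real" where
  "luk_oplus x y = min (x + y) 1"

definition luk_odot :: "real \<Rightarrow> real \<Rightarrow> real" where
  "luk_odot x y = max (x + y - 1) 0"

definition fun_oplus :: "'s set \<Rightarrow> ('s \<Rightarrow> real) \<Rightarrow> ('s \<Rightarrow> real) \<Rightarrow> ('s \<Rightarrow> real)" where
  "fun_oplus S f g = restrict (\<lambda>s. luk_oplus (f s) (g s)) S"

definition fun_odot :: "'s set \<Rightarrow> ('s \<Rightarrow> real) \<Rightarrow> ('s \<Rightarrow> real) \<Rightarrow> ('s \<Rightarrow> real)" where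
  "fun_odot S f g = restrict (\<lambda>s. luk_odot (f s) (g s)) S"

definition eff_fun :: "nat \<Rightarrow> 'a set \<Rightarrow> 's set \<Rightarrow> ('a set \<Rightarrow> ('s \<Rightarrow> real) \<Rightarrow> real) \<Rightarrow> bool" where
  "eff_fun n N S E \<longleftrightarrow> (\<forall>C f. C \<subseteq> N \<and> f \<in> S \<rightarrow>\<^sub>E Luk n \<longrightarrow> E C f \<in> Luk n)"

definition homogeneous :: "nat \<Rightarrow> 'a set \<Rightarrow> 's set \<Rightarrow> ('a set \<Rightarrow> ('s \<Rightarrow> real) \<Rightarrow> real) \<Rightarrow> bool" where
  "homogeneous n N S E \<longleftrightarrow> (\<forall>C f. C \<subseteq> N \<and> f \<in> S \<rightarrow>\<^sub>E Luk n \<longrightarrow>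
      E C (fun_oplus S f f) = luk_oplus (E C f) (E C f) \<and>
      E C (fun_odot S f f) = luk_odot (E C f) (E C f))"

end

theory Submission
  imports Defs
begin

definition T :: "nat \<Rightarrow> nat \<Rightarrow> real \<Rightarrow> real" where
  "T k j x = max 0 (min 1 (2^k * x - real j))"

lemma Luk_01: "x \<in> Luk n \<Longrightarrow> 0 \<le> x \<and> x \<le> 1"
  by (auto simp: Luk_def divide_le_eq)

lemma Luk_1: "Luk 1 = {0, 1}"
proof -
  have "Luk 1 = {real k | k. k \<le> (1::nat)}" by (simp add: Luk_def)
  also have "\<dots> = {0,1}" using le_Suc_eq by fastforce
  finally show ?thesis .
qed

lemma Luk_1_sub: "n > 0 \<Longrightarrow> Luk 1 \<subseteq> Luk n"
proof
  fix x assume "n > 0" "x \<in> Luk 1"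
  then have "x = 0 \<or> x = 1" using Luk_1 by blast
  then show "x \<in> Luk n" unfolding Luk_def
  proof
    assume "x = 0" then show "x \<in> {real k / real n |k. k \<le> n}" by force
  next
    assume "x = 1" then have "x = real n / real n" using \<open>n>0\<close> by simp
    then show "x \<in> {real k / real n |k. k \<le> n}" by blast
  qed
qed

lemma Luk_d: assumes "x \<in> Luk n" "n > 0" shows "luk_oplus x x \<in> Luk n"
proof -
  obtain i where i: "x = real i / real n" "i \<le> n" using assms(1) by (auto simp: Luk_def)
  have "luk_oplus x x = real (min (2*i) n) / real n"
  proof (cases "2*i \<le> n")
    case True
    have e: "x + x = real (2*i) / real n" using i by (simp add: add_divide_distrib[symmetric])
    have "real (2*i) / real n \<le> 1" using True assms(2) by simp
    then show ?thesis using True e by (simp add: luk_oplus_def)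
  next
    case False
    have e: "x + x = real (2*i) / real n" using i by (simp add: add_divide_distrib[symmetric])
    have "real (2*i) / real n \<ge> 1" using False assms(2) by simp
    then show ?thesis using False e assms(2) by (simp add: luk_oplus_def)
  qed
  then show ?thesis unfolding Luk_def by fastforce
qed

lemma Luk_s: assumes "x \<in> Luk n" "n > 0" shows "luk_odot x x \<in> Luk n"
proof -
  obtain i where i: "x = real i / real n" "i \<le> n" using assms(1) by (auto simp: Luk_def)
  have "luk_odot x x = real (2*i - n) / real n"
  proof (cases "n \<le> 2*i")
    case True
    have e: "x + x - 1 = real (2*i - n) / real n" using i True assms(2) by (simp add: field_simps of_nat_diff)
    have "real (2*i - n) / real n \<ge> 0" by simp
    then show ?thesis using e by (simp add: luk_odot_def)
  next
    case False
    have e: "x + x - 1 = (real (2*i) - real n) / real n" using i assms(2) by (simp add: field_simps)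
    have "(real (2*i) - real n) / real n \<le> 0" using False assms(2) by (simp add: divide_nonpos_pos)
    then show ?thesis using False e by (simp add: luk_odot_def)
  qed
  then show ?thesis unfolding Luk_def using i by fastforce
qed

lemma T_d: "luk_oplus (T k j x) (T k j x) = T (Suc k) (2*j) x"
proof -
  have e: "2^Suc k * x - real (2*j) = 2*(2^k*x - real j)" by (simp add: algebra_simps)
  show ?thesis unfolding T_def luk_oplus_def e by (simp add: max_def min_def)
qed

lemma T_s: "luk_odot (T k j x) (T k j x) = T (Suc k) (2*j+1) x"
proof -
  have e: "2^Suc k * x - real (2*j+1) = 2*(2^k*x - real j) - 1" by (simp add: algebra_simps)
  show ?thesis unfolding T_def luk_odot_def e by (simp add: max_def min_def)
qed

lemma transport:
  assumes hom: "homogeneous n N S E" and ef: "eff_fun n N S E" and n: "n > 0"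
    and C: "C \<subseteq> N" and f: "f \<in> S \<rightarrow>\<^sub>E Luk n"
  shows "j < 2^k \<Longrightarrow> (\<lambda>s\<in>S. T k j (f s)) \<in> S \<rightarrow>\<^sub>E Luk n \<and>
           E C (\<lambda>s\<in>S. T k j (f s)) = T k j (E C f)"
proof (induction k arbitrary: j)
  case 0
  then have j: "j = 0" by simp
  have "(\<lambda>s\<in>S. T 0 0 (f s)) = f"
  proof
    fix s show "(\<lambda>s\<in>S. T 0 0 (f s)) s = f s"
    proof (cases "s \<in> S")
      case True
      then have "f s \<in> Luk n" using f by auto
      then show ?thesis using True Luk_01[of "f s" n] by (simp add: T_def)
    next
      case False then show ?thesis using f by (auto simp: PiE_def extensional_def)
    qed
  qed
  moreover have "T 0 0 (E C f) = E C f"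
    using ef C f Luk_01[of "E C f" n] by (auto simp: T_def eff_fun_def)
  ultimately show ?case using j f by simp
next
  case (Suc k)
  define j' where "j' = j div 2"
  have j': "j' < 2^k" using Suc.prems by (simp add: j'_def)
  define g where "g = (\<lambda>s\<in>S. T k j' (f s))"
  have IH: "g \<in> S \<rightarrow>\<^sub>E Luk n" "E C g = T k j' (E C f)" using Suc.IH[OF j'] unfolding g_def by blast+
  have hg: "E C (fun_oplus S g g) = luk_oplus (E C g) (E C g)"
       "E C (fun_odot S g g) = luk_odot (E C g) (E C g)"
    using hom C IH(1) unfolding homogeneous_def by auto
  have go: "fun_oplus S g g \<in> S \<rightarrow>\<^sub>E Luk n" "fun_odot S g g \<in> S \<rightarrow>\<^sub>E Luk n"
    using IH(1) Luk_d[OF _ n] Luk_s[OF _ n] by (auto simp: fun_oplus_def fun_odot_def)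
  show ?case
  proof (cases "even j")
    case True
    then have jj: "j = 2*j'" by (simp add: j'_def)
    have eq: "fun_oplus S g g = (\<lambda>s\<in>S. T (Suc k) j (f s))"
      unfolding fun_oplus_def g_def jj by (rule restrict_ext) (simp add: T_d)
    show ?thesis unfolding eq[symmetric] using go hg IH by (simp add: T_d jj)
  next
    case False
    then have jj: "j = 2*j'+1" by (simp add: j'_def)
    have eq: "fun_odot S g g = (\<lambda>s\<in>S. T (Suc k) j (f s))"
      unfolding fun_odot_def g_def jj by (rule restrict_ext) (simp add: T_s)
    show ?thesis unfolding eq[symmetric] using go hg IH by (simp add: T_s jj)
  qed
qed

lemma separate:
  assumes n: "n > 0" and x: "x \<in> Luk n" and y: "y \<in> Luk n" and xy: "x < y"
  shows "\<exists>k j. j < (2::nat)^k \<and> T k j x = 0 \<and> T k j y = 1 \<and> (\<forall>z\<in>Luk n. T k j z \<in> {0,1})"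
proof -
  obtain a where a: "x = real a / real n" "a \<le> n" using x by (auto simp: Luk_def)
  obtain b where b: "y = real b / real n" "b \<le> n" using y by (auto simp: Luk_def)
  have nr: "real n > 0" using n by simp
  have ab: "a < b" using xy a b nr by (auto simp: divide_less_cancel)
  define k where "k = Suc n"
  define K :: real where "K = 2^k"
  have "n < 2^n" by (rule less_exp)
  then have "real n < 2^n" by (metis of_nat_less_iff of_nat_numeral of_nat_power)
  then have K2: "K \<ge> 2 * real n" unfolding K_def k_def by simp
  have Kn: "K / real n \<ge> 2" using K2 nr by (simp add: le_divide_eq)
  define j where "j = nat \<lceil>K * real a / real n\<rceil>"
  have Kapos: "K * real a / real n \<ge> 0" using nr K2 by simp
  have j1: "real j \<ge> K * real a / real n" unfolding j_def using Kapos by linarith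
  have j2: "real j < K * real a / real n + 1" unfolding j_def using Kapos by linarith
  have an: "real a \<le> real n - 1" using ab b by linarith
  have "K * real a / real n \<le> K * (real n - 1) / real n"
    using an nr K2 by (intro divide_right_mono mult_left_mono) auto
  also have "\<dots> = K - K / real n" using nr by (simp add: field_simps)
  finally have "real j < K" using j2 Kn by linarith
  then have jk: "j < 2^k" unfolding K_def by (metis of_nat_less_iff of_nat_numeral of_nat_power)
  have low: "T k j (real i / real n) = 0" if "i \<le> a" for i
  proof -
    have "K * (real i / real n) \<le> K * real a / real n"
      using that nr K2 by (simp add: divide_right_mono)
    then show ?thesis unfolding T_def K_def[symmetric] using j1 by simp
  qed
  have high: "T k j (real i / real n) = 1" if "a < i" for i
  proof -
    have "real a + 1 \<le> real i" using that by simp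
    then have "K * (real a + 1) / real n \<le> K * (real i / real n)"
      using nr K2 by (simp add: divide_right_mono)
    moreover have "K * (real a + 1) / real n = K * real a / real n + K / real n"
      by (simp add: distrib_left add_divide_distrib)
    ultimately have "K * (real i / real n) - real j \<ge> 1" using j2 Kn by linarith
    then show ?thesis unfolding T_def K_def[symmetric] by simp
  qed
  have "\<forall>z\<in>Luk n. T k j z \<in> {0,1}"
  proof
    fix z assume "z \<in> Luk n"
    then obtain i where "z = real i / real n" by (auto simp: Luk_def)
    then show "T k j z \<in> {0,1}" using low high by (cases "i \<le> a") auto
  qed
  then show ?thesis using jk low[of a] high[OF ab] a b by blast
qed

theorem mainTheorem3:
  fixes n :: nat and N :: "'a set" and S :: "'s set"
    and E E' :: "'a set \<Rightarrow> ('s \<Rightarrow> real) \<Rightarrow> real"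
  assumes "n > 0" and "finite N"
    and "eff_fun n N S E" and "eff_fun n N S E'"
    and "homogeneous n N S E" and "homogeneous n N S E'"
  shows "(\<forall>C f. C \<subseteq> N \<and> f \<in> S \<rightarrow>\<^sub>E Luk n \<longrightarrow> E C f = E' C f) \<longleftrightarrow>
         (\<forall>C f. C \<subseteq> N \<and> f \<in> S \<rightarrow>\<^sub>E Luk 1 \<longrightarrow> E C f = E' C f)"
proof
  assume H: "\<forall>C f. C \<subseteq> N \<and> f \<in> S \<rightarrow>\<^sub>E Luk n \<longrightarrow> E C f = E' C f"
  show "\<forall>C f. C \<subseteq> N \<and> f \<in> S \<rightarrow>\<^sub>E Luk 1 \<longrightarrow> E C f = E' C f"
  proof (intro allI impI)
    fix C f assume "C \<subseteq> N \<and> f \<in> S \<rightarrow>\<^sub>E Luk 1"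
    moreover have "S \<rightarrow>\<^sub>E Luk 1 \<subseteq> S \<rightarrow>\<^sub>E Luk n" using Luk_1_sub[OF assms(1)] by (auto simp: PiE_def Pi_def)
    ultimately show "E C f = E' C f" using H by blast
  qed
next
  assume H: "\<forall>C f. C \<subseteq> N \<and> f \<in> S \<rightarrow>\<^sub>E Luk 1 \<longrightarrow> E C f = E' C f"
  show "\<forall>C f. C \<subseteq> N \<and> f \<in> S \<rightarrow>\<^sub>E Luk n \<longrightarrow> E C f = E' C f"
  proof (intro allI impI)
    fix C f assume Cf: "C \<subseteq> N \<and> f \<in> S \<rightarrow>\<^sub>E Luk n"
    have ex: "E C f \<in> Luk n" "E' C f \<in> Luk n" using assms(3,4) Cf by (auto simp: eff_fun_def)
    show "E C f = E' C f"
    proof (rule ccontr)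
      assume ne: "E C f \<noteq> E' C f"
      have "\<exists>k j. j < (2::nat)^k \<and> T k j (E C f) \<noteq> T k j (E' C f) \<and> (\<forall>z\<in>Luk n. T k j z \<in> {0,1})"
      proof (cases "E C f < E' C f")
        case True
        from separate[OF assms(1) ex(1) ex(2) True] show ?thesis by fastforce
      next
        case False
        then have "E' C f < E C f" using ne by simp
        from separate[OF assms(1) ex(2) ex(1) this] show ?thesis by fastforce
      qed
      then obtain k j where kj: "j < (2::nat)^k" "T k j (E C f) \<noteq> T k j (E' C f)"
        "\<forall>z\<in>Luk n. T k j z \<in> {0,1}" by blast
      define g where "g = (\<lambda>s\<in>S. T k j (f s))"
      have t1: "g \<in> S \<rightarrow>\<^sub>E Luk n" "E C g = T k j (E C f)"
        using transport[OF assms(5) assms(3) assms(1), of C f j k] Cf kj(1) by (auto simp: g_def)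
      have t2: "E' C g = T k j (E' C f)"
        using transport[OF assms(6) assms(4) assms(1), of C f j k] Cf kj(1) by (auto simp: g_def)
      have "g \<in> S \<rightarrow>\<^sub>E Luk 1"
        using Cf kj(3) unfolding g_def Luk_1 by (auto simp: PiE_def Pi_def)
      then have "E C g = E' C g" using H Cf by blast
      then show False using t1 t2 kj(2) by simp
    qed
  qed
qed

end
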